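(* There is an absolute constant $K>0$ such that the following holds. Let $n\ge1$, $k=\lfloor\sqrt n\rfloor$, and let $M_n$ be the $\binom{n}{k}\times n$ matrix whose rows are all distinct $0/1$ vectors of length $n$ with exactly $k$ ones. Let $R$ be a row player's payoff matrix (entries in $[0,1]$) that contains $M_n$ as a submatrix (on some set $S$ of rows and some set $T$ of columns), such that every row of $R$ not in $S$ is identically $0$, and for every row in $S$, every entry in a column not in $T$ equals $1$. Let $p,p_r,p_c\in[0,1]$. Then for every mixed strategy $\mathbf{x}$ of the row player allocating probability at least $p_r$ to rows not in $S$, there exists a column $\ell\in T$ such that for every mixed strategy $\mathbf{y}$ of the column player that allocates probability at least $p_c$ to columns not in $T$ and probability $p$ to column $\ell$, the row player's regret $\max_i\mathbf{e}_i^TR\mathbf{y}-\mathbf{x}^TR\mathbf{y}$ is at least $p-K/\sqrt n+p_rp_c$.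
   Context: Mixed strategies are probability vectors over rows/columns; $\mathbf{e}_i$ is the $i$-th unit vector; the row player's payoff is $\mathbf{x}^TR\mathbf{y}$ and his regret is the payoff of his best response to $\mathbf{y}$ minus $\mathbf{x}^TR\mathbf{y}$. *)

theory Defs
  imports Complex_Main
begin

definition mixed_strategy :: "nat \<Rightarrow> (nat \<Rightarrow> real) \<Rightarrow> bool" where
  "mixed_strategy m x \<longleftrightarrow> (\<forall>i<m. x i \<ge> 0) \<and> (\<Sum>i<m. x i) = 1"

definition row_payoff :: "nat \<Rightarrow> nat \<Rightarrow> (nat \<Rightarrow> nat \<Rightarrow> real) \<Rightarrow> (nat \<Rightarrow> real) \<Rightarrow> (nat \<Rightarrow> real) \<Rightarrow> real" where
  "row_payoff m N R x y = (\<Sum>i<m. \<Sum>j<N. x i * R i j * y j)"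

definition row_regret :: "nat \<Rightarrow> nat \<Rightarrow> (nat \<Rightarrow> nat \<Rightarrow> real) \<Rightarrow> (nat \<Rightarrow> real) \<Rightarrow> (nat \<Rightarrow> real) \<Rightarrow> real" where
  "row_regret m N R x y = Max ((\<lambda>i. \<Sum>j<N. R i j * y j) ` {..<m}) - row_payoff m N R x y"

text \<open>R contains M_n (all 0/1 rows with exactly k ones, each exactly once) as the submatrix
  on rows S and columns T, up to ordering of rows and columns.\<close>
definition contains_Mn :: "nat \<Rightarrow> nat \<Rightarrow> (nat \<Rightarrow> nat \<Rightarrow> real) \<Rightarrow> nat set \<Rightarrow> nat set \<Rightarrow> bool" where
  "contains_Mn n k R S T \<longleftrightarrow> card T = n \<and>
     (\<forall>i\<in>S. \<forall>j\<in>T. R i j = 0 \<or> R i j = 1) \<and>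
     bij_betw (\<lambda>i. {j\<in>T. R i j = 1}) S {A. A \<subseteq> T \<and> card A = k}"

end

theory Submission
  imports Defs
begin

lemma swap_lemma:
  fixes y :: "nat \<Rightarrow> real"
  assumes "finite T" "A \<subseteq> T" "card A = k" "k \<ge> 1" "l \<in> T" "l \<notin> A"
    "\<forall>j\<in>T. y j \<ge> 0" "sum y A \<le> 1"
  shows "\<exists>A'. A' \<subseteq> T \<and> card A' = k \<and> l \<in> A' \<and> sum y A' \<ge> sum y A + y l - 1 / real k"
proof -
  have fA: "finite A" using assms finite_subset by blast
  have ne: "A \<noteq> {}" using assms by auto
  obtain a where a: "a \<in> A" "y a = Min (y ` A)" proof -
    have "Min (y ` A) \<in> y ` A" using fA ne by (intro Min_in) auto
    thus ?thesis using that by (metis imageE)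
  qed
  have amin: "\<forall>b\<in>A. y a \<le> y b" using a fA by simp
  have "real k * y a \<le> sum y A" using sum_bounded_below[of A "y a" y] amin assms(3) by simp
  hence "real k * y a \<le> 1" using assms(8) by linarith
  hence ya: "y a \<le> 1 / real k" using assms(4) by (simp add: field_simps)
  define A' where "A' = insert l (A - {a})"
  have s: "sum y A' = y l + (sum y A - y a)" using fA a(1) assms(6) by (simp add: A'_def sum_diff1)
  have c: "card A' = k" using fA a(1) assms(3,4,6) by (simp add: A'_def)
  have "A' \<subseteq> T" using assms(2,5) a by (auto simp: A'_def)
  thus ?thesis using s c ya by (intro exI[of _ A']) (auto simp: A'_def)
qed

lemma k_facts:
  assumes "n \<ge> (1::nat)"
  shows "real (nat \<lfloor>sqrt (real n)\<rfloor>) \<ge> 1"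
    and "1 / real (nat \<lfloor>sqrt (real n)\<rfloor>) \<le> 2 / sqrt (real n)"
    and "real (nat \<lfloor>sqrt (real n)\<rfloor>) / real n \<le> 1 / sqrt (real n)"
    and "nat \<lfloor>sqrt (real n)\<rfloor> \<le> n"
proof -
  let ?s = "sqrt (real n)"
  have s1: "?s \<ge> 1" using assms by simp
  have fl: "real (nat \<lfloor>?s\<rfloor>) = of_int \<lfloor>?s\<rfloor>" using s1 by simp
  have a: "of_int \<lfloor>?s\<rfloor> \<le> ?s" by (rule of_int_floor_le)
  have b: "?s < of_int \<lfloor>?s\<rfloor> + 1" by (rule real_of_int_floor_add_one_gt)
  have c: "\<lfloor>?s\<rfloor> \<ge> 1" using s1 by linarith
  show k1: "real (nat \<lfloor>?s\<rfloor>) \<ge> 1" using fl c by simp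
  have "?s \<le> 2 * real (nat \<lfloor>?s\<rfloor>)" using fl b k1 by linarith
  thus "1 / real (nat \<lfloor>?s\<rfloor>) \<le> 2 / ?s" using k1 s1 by (simp add: field_simps)
  have nn: "real n = ?s * ?s" by simp
  have "real (nat \<lfloor>?s\<rfloor>) * ?s \<le> real n" using mult_right_mono[OF a, of ?s] fl s1 nn by simp
  thus "real (nat \<lfloor>?s\<rfloor>) / real n \<le> 1 / ?s" using s1 assms by (simp add: field_simps)
  have "?s \<le> real n" using mult_right_mono[OF s1, of ?s] s1 nn by simp
  hence "real (nat \<lfloor>?s\<rfloor>) \<le> real n" using fl a by linarith
  thus "nat \<lfloor>?s\<rfloor> \<le> n" by simp
qed

lemma main_lemma:
  fixes n m N :: nat and R :: "nat \<Rightarrow> nat \<Rightarrow> real" and S T :: "nat set"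
    and p pr pc :: real and x :: "nat \<Rightarrow> real"
  defines "k \<equiv> nat \<lfloor>sqrt (real n)\<rfloor>"
  assumes n1: "n \<ge> 1" and Sm: "S \<subseteq> {..<m}" and TN: "T \<subseteq> {..<N}"
    and Rb: "\<forall>i<m. \<forall>j<N. 0 \<le> R i j \<and> R i j \<le> 1"
    and cM: "contains_Mn n k R S T"
    and R0: "\<forall>i\<in>{..<m} - S. \<forall>j<N. R i j = 0"
    and R1: "\<forall>i\<in>S. \<forall>j\<in>{..<N} - T. R i j = 1"
    and p0: "0 \<le> p" and p1: "p \<le> 1" and pr0: "0 \<le> pr" and pc0: "0 \<le> pc"
    and xm: "mixed_strategy m x" and xpr: "(\<Sum>i\<in>{..<m} - S. x i) \<ge> pr"
  shows "\<exists>l\<in>T. \<forall>y. mixed_strategy N y \<and> (\<Sum>j\<in>{..<N} - T. y j) \<ge> pc \<and> y l = p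
            \<longrightarrow> row_regret m N R x y \<ge> p - 3 / sqrt (real n) + pr * pc"
proof -
  define B where "B i = {j\<in>T. R i j = 1}" for i
  have cT: "card T = n" and R01: "\<forall>i\<in>S. \<forall>j\<in>T. R i j = 0 \<or> R i j = 1"
    and bij: "bij_betw B S {A. A \<subseteq> T \<and> card A = k}"
    using cM unfolding contains_Mn_def B_def by auto
  have fT: "finite T" using TN finite_subset by blast
  have fS: "finite S" using Sm finite_subset by blast
  have Tne: "T \<noteq> {}" using cT n1 by auto
  have k1r: "real k \<ge> 1" using k_facts(1)[OF n1] unfolding k_def by blast
  hence k1: "k \<ge> 1" by simp
  have kinv: "1 / real k \<le> 2 / sqrt (real n)"
    and kn: "real k / real n \<le> 1 / sqrt (real n)" and kle: "k \<le> n"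
    using k_facts[OF n1] unfolding k_def by auto
  have x0: "\<forall>i<m. x i \<ge> 0" and xs: "(\<Sum>i<m. x i) = 1" using xm unfolding mixed_strategy_def by auto
  have cardB: "card (B i) = k" if "i \<in> S" for i using bij that by (auto simp: bij_betw_def)
  have BT: "B i \<subseteq> T" for i by (auto simp: B_def)
  have surjB: "\<exists>i\<in>S. B i = A" if "A \<subseteq> T" "card A = k" for A
  proof -
    have "A \<in> B ` S" using bij that unfolding bij_betw_def by simp
    thus ?thesis by (metis imageE)
  qed
  define \<sigma> where "\<sigma> = (\<Sum>i\<in>S. x i)"
  define s0 where "s0 = (\<Sum>i\<in>{..<m} - S. x i)"
  have split: "(\<Sum>i<m. f i) = (\<Sum>i\<in>{..<m} - S. f i) + (\<Sum>i\<in>S. f i)" for f :: "nat \<Rightarrow> real"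
    using sum.subset_diff[OF Sm, of f] by simp
  have sig1: "\<sigma> + s0 = 1" using split[of x] xs unfolding \<sigma>_def s0_def by simp
  have s00: "s0 \<ge> 0" unfolding s0_def using x0 by (intro sum_nonneg) auto
  have sig0: "\<sigma> \<ge> 0" unfolding \<sigma>_def using x0 Sm by (intro sum_nonneg) auto
  define w where "w l = (\<Sum>i\<in>S. if R i l = 1 then x i else 0)" for l
  have w0: "0 \<le> w l" for l unfolding w_def using x0 Sm by (intro sum_nonneg) auto
  have wsig: "w l \<le> \<sigma>" for l unfolding w_def \<sigma>_def using x0 Sm by (intro sum_mono) auto
  have inner: "(\<Sum>l\<in>T. if R i l = 1 then x i else 0) = real k * x i" if "i \<in> S" for i
  proof -
    have "(\<Sum>l\<in>T. if R i l = 1 then x i else 0) = (\<Sum>l\<in>B i. x i)"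
      unfolding B_def using fT by (simp add: sum.inter_filter[symmetric] del: sum_constant)
    also have "\<dots> = real k * x i" using cardB[OF that] by simp
    finally show ?thesis .
  qed
  have sumw: "(\<Sum>l\<in>T. w l) = real k * \<sigma>"
  proof -
    have "(\<Sum>l\<in>T. w l) = (\<Sum>i\<in>S. \<Sum>l\<in>T. if R i l = 1 then x i else 0)"
      unfolding w_def by (rule sum.swap)
    also have "\<dots> = (\<Sum>i\<in>S. real k * x i)" using inner by (intro sum.cong) auto
    finally show ?thesis unfolding \<sigma>_def by (simp add: sum_distrib_left)
  qed
  obtain l where lT: "l \<in> T" and lmin: "w l = Min (w ` T)"
  proof -
    have "Min (w ` T) \<in> w ` T" using fT Tne by (intro Min_in) auto
    thus ?thesis using that by (metis imageE)
  qed
  have "\<forall>l'\<in>T. w l \<le> w l'" using lmin fT by simp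
  hence "real n * w l \<le> real k * \<sigma>" using sum_bounded_below[of T "w l" w] cT sumw by simp
  also have "\<dots> \<le> real k" using sig1 s00 by (simp add: mult_left_le)
  finally have "w l \<le> real k / real n" using n1 by (simp add: field_simps)
  hence wl: "w l \<le> 1 / sqrt (real n)" using kn by linarith
  show ?thesis
  proof (intro bexI[OF _ lT] allI impI)
    fix y assume asm: "mixed_strategy N y \<and> (\<Sum>j\<in>{..<N} - T. y j) \<ge> pc \<and> y l = p"
    have y0: "\<forall>j<N. y j \<ge> 0" and ys: "(\<Sum>j<N. y j) = 1" using asm unfolding mixed_strategy_def by auto
    have yl: "y l = p" using asm by simp
    define q where "q = (\<Sum>j\<in>{..<N} - T. y j)"
    have qpc: "q \<ge> pc" using asm q_def by simp
    define yB where "yB A = (\<Sum>j\<in>A. y j)" for A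
    define val where "val i = (\<Sum>j<N. R i j * y j)" for i
    have yT0: "\<forall>j\<in>T. y j \<ge> 0" using y0 TN by auto
    have yle1: "yB A \<le> 1" if "A \<subseteq> T" for A
    proof -
      have "yB A \<le> (\<Sum>j<N. y j)" unfolding yB_def using that TN y0
        by (intro sum_mono2) auto
      thus ?thesis using ys by simp
    qed
    have valS: "val i = q + yB (B i)" if "i \<in> S" for i
    proof -
      have "val i = (\<Sum>j\<in>{..<N} - T. R i j * y j) + (\<Sum>j\<in>T. R i j * y j)"
        unfolding val_def using sum.subset_diff[OF TN, of "\<lambda>j. R i j * y j"] by simp
      also have "(\<Sum>j\<in>{..<N} - T. R i j * y j) = q" unfolding q_def using R1 that
        by (intro sum.cong) auto
      also have "(\<Sum>j\<in>T. R i j * y j) = (\<Sum>j\<in>T. if R i j = 1 then y j else 0)"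
        using R01 that by (intro sum.cong) force+
      also have "\<dots> = yB (B i)" unfolding yB_def B_def using fT by (simp add: sum.inter_filter)
      finally show ?thesis .
    qed
    have valN: "val i = 0" if "i \<in> {..<m} - S" for i unfolding val_def using R0 that by simp
    have improve: "\<exists>i'\<in>S. l \<in> B i' \<and> yB (B i') \<ge> yB (B i) + (if R i l = 1 then 0 else p - 1 / real k)"
      if iS: "i \<in> S" for i
    proof (cases "R i l = 1")
      case True thus ?thesis using iS lT by (auto simp: B_def)
    next
      case False
      hence "l \<notin> B i" by (simp add: B_def)
      then obtain A' where A': "A' \<subseteq> T" "card A' = k" "l \<in> A'"
        "sum y A' \<ge> sum y (B i) + y l - 1 / real k"
        using swap_lemma[OF fT BT cardB[OF iS] k1 lT _ yT0 yle1[OF BT, unfolded yB_def]] by blast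
      obtain i' where "i' \<in> S" "B i' = A'" using surjB[OF A'(1,2)] by blast
      thus ?thesis using A' False yl by (auto simp: yB_def)
    qed
    have Sne: "S \<noteq> {}"
    proof -
      obtain A where "A \<subseteq> T" "card A = k" using obtain_subset_with_card_n[of k T] kle cT by auto
      thus ?thesis using surjB by blast
    qed
    then obtain i0 where i0: "i0 \<in> S" by blast
    obtain i1 where i1: "i1 \<in> S" "l \<in> B i1" using improve[OF i0] by blast
    have yBp: "yB (B i1) \<ge> p"
    proof -
      have "y l \<le> yB (B i1)" unfolding yB_def using i1 fT BT[of i1] yT0 finite_subset[OF BT[of i1] fT]
        by (intro member_le_sum) auto
      thus ?thesis using yl by simp
    qed
    define M where "M = Max (val ` {..<m})"
    have Mge: "val i \<le> M" if "i < m" for i unfolding M_def using that by simp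
    define lb where "lb i = (if i \<in> S then q + yB (B i) + (if R i l = 1 then 0 else p - 1 / real k) else q + p)" for i
    have Mlb: "lb i \<le> M" if "i < m" for i
    proof (cases "i \<in> S")
      case True
      then obtain i' where "i' \<in> S" "yB (B i') \<ge> yB (B i) + (if R i l = 1 then 0 else p - 1 / real k)"
        using improve by blast
      moreover have "val i' \<le> M" using Mge \<open>i' \<in> S\<close> Sm by auto
      ultimately show ?thesis using True valS lb_def by auto
    next
      case False
      have "val i1 \<le> M" using Mge i1 Sm by auto
      thus ?thesis using False valS[OF i1(1)] yBp lb_def by auto
    qed
    have MM: "M = (\<Sum>i<m. x i * M)" using xs by (simp add: sum_distrib_right[symmetric])
    also have "\<dots> \<ge> (\<Sum>i<m. x i * lb i)" using x0 Mlb by (intro sum_mono mult_left_mono) auto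
    finally have M1: "M \<ge> (\<Sum>i<m. x i * lb i)" .
    have pay: "row_payoff m N R x y = (\<Sum>i<m. x i * val i)"
      unfolding row_payoff_def val_def by (simp add: sum_distrib_left mult.assoc)
    define c where "c = p - 1 / real k"
    have diff: "x i * lb i - x i * val i = (if i \<in> S then (if R i l = 1 then 0 else c * x i) else x i * (q + p))"
      if "i < m" for i
      using that valS valN unfolding lb_def c_def by (auto simp: algebra_simps)
    have "row_regret m N R x y = M - (\<Sum>i<m. x i * val i)"
      unfolding row_regret_def pay M_def val_def by simp
    also have "\<dots> \<ge> (\<Sum>i<m. x i * lb i - x i * val i)" using M1 by (simp add: sum_subtractf)
    finally have r0: "row_regret m N R x y \<ge> (\<Sum>i<m. x i * lb i - x i * val i)" .
    have r1: "row_regret m N R x y \<ge> (\<Sum>i<m. (if i \<in> S then (if R i l = 1 then 0 else c * x i) else x i * (q + p)))"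
    proof -
      have "(\<Sum>i<m. x i * lb i - x i * val i) = (\<Sum>i<m. (if i \<in> S then (if R i l = 1 then 0 else c * x i) else x i * (q + p)))"
        using diff by (intro sum.cong) auto
      thus ?thesis using r0 by simp
    qed
    have s1: "(\<Sum>i\<in>S. (if R i l = 1 then 0 else c * x i)) = c * (\<sigma> - w l)"
    proof -
      have "(\<Sum>i\<in>S. (if R i l = 1 then 0 else c * x i)) = (\<Sum>i\<in>S. c * (x i - (if R i l = 1 then x i else 0)))"
        by (intro sum.cong) auto
      thus ?thesis unfolding \<sigma>_def w_def by (simp add: sum_distrib_left[symmetric] sum_subtractf)
    qed
    have "(\<Sum>i<m. (if i \<in> S then (if R i l = 1 then 0 else c * x i) else x i * (q + p)))
       = (\<Sum>i\<in>{..<m} - S. x i * (q + p)) + (\<Sum>i\<in>S. (if R i l = 1 then 0 else c * x i))"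
      by (simp add: split)
    also have "\<dots> = s0 * (q + p) + c * (\<sigma> - w l)" unfolding s0_def using s1 by (simp add: sum_distrib_right)
    finally have r2: "row_regret m N R x y \<ge> s0 * (q + p) + c * (\<sigma> - w l)" using r1 by simp
    have a1: "s0 * q \<ge> pr * pc" using xpr s0_def qpc pr0 pc0 by (intro mult_mono) auto
    have dw: "\<sigma> - w l \<le> 1" "\<sigma> - w l \<ge> 0" using sig1 s00 w0[of l] wsig[of l] by auto
    have kpos: "1 / real k \<ge> 0" by simp
    have a2: "(1 / real k) * (\<sigma> - w l) \<le> 1 / real k" using mult_left_mono[OF dw(1) kpos] by simp
    have a3: "p * w l \<le> w l" using mult_right_mono[OF p1 w0[of l]] by simp
    have "c * (\<sigma> - w l) = p * \<sigma> - p * w l - (1 / real k) * (\<sigma> - w l)" unfolding c_def by (simp add: algebra_simps)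
    hence "s0 * (q + p) + c * (\<sigma> - w l) \<ge> s0 * q + p * (s0 + \<sigma>) - w l - 1 / real k"
      using a2 a3 by (simp add: algebra_simps)
    hence "s0 * (q + p) + c * (\<sigma> - w l) \<ge> pr * pc + p - 1 / sqrt (real n) - 2 / sqrt (real n)"
      using a1 sig1 wl kinv by (simp add: add.commute) 
    moreover have "1 / sqrt (real n) + 2 / sqrt (real n) = 3 / sqrt (real n)" by (simp add: add_divide_distrib[symmetric])
    ultimately show "row_regret m N R x y \<ge> p - 3 / sqrt (real n) + pr * pc" using r2 by linarith
  qed
qed

theorem corollary1:
  shows "\<exists>K>0. \<forall>(n::nat) (m::nat) (N::nat) (R::nat \<Rightarrow> nat \<Rightarrow> real) (S::nat set) (T::nat set)
           (p::real) (pr::real) (pc::real) (x::nat \<Rightarrow> real).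
     n \<ge> 1 \<and> S \<subseteq> {..<m} \<and> T \<subseteq> {..<N} \<and>
     (\<forall>i<m. \<forall>j<N. 0 \<le> R i j \<and> R i j \<le> 1) \<and>
     contains_Mn n (nat \<lfloor>sqrt (real n)\<rfloor>) R S T \<and>
     (\<forall>i\<in>{..<m} - S. \<forall>j<N. R i j = 0) \<and>
     (\<forall>i\<in>S. \<forall>j\<in>{..<N} - T. R i j = 1) \<and>
     0 \<le> p \<and> p \<le> 1 \<and> 0 \<le> pr \<and> pr \<le> 1 \<and> 0 \<le> pc \<and> pc \<le> 1 \<and>
     mixed_strategy m x \<and> (\<Sum>i\<in>{..<m} - S. x i) \<ge> pr
     \<longrightarrow> (\<exists>l\<in>T. \<forall>y. mixed_strategy N y \<and> (\<Sum>j\<in>{..<N} - T. y j) \<ge> pc \<and> y l = p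
            \<longrightarrow> row_regret m N R x y \<ge> p - K / sqrt (real n) + pr * pc)"
proof (intro exI[of _ "3::real"] conjI allI impI)
  show "(0::real) < 3" by simp
next
  fix n m N :: nat and R :: "nat \<Rightarrow> nat \<Rightarrow> real" and S T :: "nat set" and p pr pc :: real and x :: "nat \<Rightarrow> real"
  assume H: "n \<ge> 1 \<and> S \<subseteq> {..<m} \<and> T \<subseteq> {..<N} \<and>
     (\<forall>i<m. \<forall>j<N. 0 \<le> R i j \<and> R i j \<le> 1) \<and>
     contains_Mn n (nat \<lfloor>sqrt (real n)\<rfloor>) R S T \<and>
     (\<forall>i\<in>{..<m} - S. \<forall>j<N. R i j = 0) \<and>
     (\<forall>i\<in>S. \<forall>j\<in>{..<N} - T. R i j = 1) \<and>
     0 \<le> p \<and> p \<le> 1 \<and> 0 \<le> pr \<and> pr \<le> 1 \<and> 0 \<le> pc \<and> pc \<le> 1 \<and>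
     mixed_strategy m x \<and> (\<Sum>i\<in>{..<m} - S. x i) \<ge> pr"
  show "\<exists>l\<in>T. \<forall>y. mixed_strategy N y \<and> (\<Sum>j\<in>{..<N} - T. y j) \<ge> pc \<and> y l = p
            \<longrightarrow> row_regret m N R x y \<ge> p - 3 / sqrt (real n) + pr * pc"
    using main_lemma[of n S m T N R p pr pc x] H by blast
qed

end
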